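(* Let $h:(0,\infty)\to\mathbb{R}$ be a differentiable, monotonically increasing (non-decreasing) function satisfying $h(1/t)\ge \frac{1}{t}\,h'(1/t)$ for all $t>0$, where $h'$ denotes the derivative of $h$. Define $g(t)=\min\{h(t),\,t\,h(1/t)\}$ for $t>0$. Then $g$ is monotonically increasing on $(0,\infty)$, i.e. $g(t_1)\ge g(t_2)$ whenever $t_1\ge t_2>0$.
   Context: Here $h$ plays the role of a parametrized function $h_{\boldsymbol{\theta}}$ (for a fixed parameter $\boldsymbol{\theta}$) and $g$ that of $g_{\boldsymbol{\theta}}$. *)

theory Defs
  imports "HOL-Analysis.Analysis"
begin

end

theory Submission
  imports Defs
begin

theorem theorem3:
  fixes h h' :: "real \<Rightarrow> real"
  assumes deriv: "\<And>t. t > 0 \<Longrightarrow> (h has_real_derivative h' t) (at t)"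
    and mono: "mono_on {0<..} h"
    and cond: "\<And>t. t > 0 \<Longrightarrow> h (1 / t) \<ge> (1 / t) * h' (1 / t)"
  shows "\<And>t1 t2. t2 > 0 \<Longrightarrow> t1 \<ge> t2 \<Longrightarrow>
           min (h t1) (t1 * h (1 / t1)) \<ge> min (h t2) (t2 * h (1 / t2))"
proof -
  fix t1 t2 :: real
  assume t2: "t2 > 0" and t12: "t1 \<ge> t2"
  have dk: "((\<lambda>t. t * h (1 / t)) has_real_derivative (h (1/x) - (1/x) * h' (1/x))) (at x)"
    if x: "x > 0" for x
  proof -
    have d1: "((\<lambda>t. 1 / t) has_real_derivative (- 1 / x^2)) (at x)"
      using x by (auto intro!: derivative_eq_intros simp: power2_eq_square field_simps)
    have d2: "((\<lambda>t. h (1 / t)) has_real_derivative (h' (1/x) * (- 1 / x^2))) (at x)"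
      using DERIV_chain2[OF deriv d1] x by simp
    have "((\<lambda>t. t * h (1 / t)) has_real_derivative (1 * h (1/x) + x * (h' (1/x) * (- 1 / x^2)))) (at x)"
      using DERIV_mult[OF DERIV_ident d2] by (simp add: algebra_simps)
    moreover have "1 * h (1/x) + x * (h' (1/x) * (- 1 / x^2)) = h (1/x) - (1/x) * h' (1/x)"
      using x by (simp add: power2_eq_square field_simps)
    ultimately show ?thesis by (metis DERIV_cong)
  qed
  have k: "t2 * h (1 / t2) \<le> t1 * h (1 / t1)"
  proof (rule DERIV_nonneg_imp_nondecreasing[OF t12])
    fix x assume "t2 \<le> x" "x \<le> t1"
    then have "x > 0" using t2 by simp
    then show "\<exists>y. ((\<lambda>t. t * h (1 / t)) has_real_derivative y) (at x) \<and> 0 \<le> y"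
      using dk cond by fastforce
  qed
  have "h t2 \<le> h t1" using mono t2 t12 by (auto simp: mono_on_def)
  then show "min (h t1) (t1 * h (1 / t1)) \<ge> min (h t2) (t2 * h (1 / t2))"
    using k by linarith
qed

end
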